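(* Let $\rho>0$ and assume $\Gamma(0)<\Gamma(1)$ and $1+\rho\ln\mu(0)>0$. Then for every $\rho$-admissible scaling $n\mapsto L_n$, \[ \lim_{n\to\infty}\mathbb{P}\big[\mathbb{M}(n;L_n)\text{ contains no isolated nodes}\big]=\begin{cases}0 & \text{if } 1+\rho\ln\Gamma(0)<0,\\ 1 & \text{if } 1+\rho\ln\Gamma(0)>0.\end{cases} \]
   Context: Homogeneous binary multiplicative attribute graph (MAG) model. Fix $\mu(0),\mu(1)\in(0,1)$ with $\mu(0)+\mu(1)=1$, and a symmetric $2\times2$ matrix $(q(a,b))_{a,b\in\{0,1\}}$ with $q(0,1)=q(1,0)$ and $0<q(a,b)<1$ for all $a,b$. On a probability space, let $\{A, A_\ell(u):\ell,u\ge1\}$ be i.i.d. $\{0,1\}$-valued with $\mathbb{P}[A=1]=\mu(1)$, $\mathbb{P}[A=0]=\mu(0)$, and independently let $\{U(u,v): 1\le u<v\}$ be i.i.d. uniform on $(0,1)$, with $U(v,u)=U(u,v)$. For $L\ge1$ put $\mathbf{A}_L(u)=(A_1(u),\dots,A_L(u))$ and $Q_L(\mathbf a,\mathbf b)=\prod_{\ell=1}^L q(a_\ell,b_\ell)$ for $\mathbf a,\mathbf b\in\{0,1\}^L$. The random graph $\mathbb{M}(n;L)$ has vertex set $\{1,\dots,n\}$ and an undirected edge between distinct $u,v$ iff $U(u,v)\le Q_L(\mathbf A_L(u),\mathbf A_L(v))$. A node is isolated if it has no neighbor. Set $\Gamma(a)=\mathbb{E}[q(a,A)]=q(a,0)\mu(0)+q(a,1)\mu(1)$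 for $a\in\{0,1\}$. For $\rho>0$, a scaling $n\mapsto L_n$ of positive integers is $\rho$-admissible if $L_n\sim\rho\ln n$ as $n\to\infty$. *)

theory Defs
  imports "HOL-Probability.Probability" "HOL-Library.Landau_Symbols"
begin

text \<open>Binary attributes are encoded as bool: False = 0, True = 1.
  mu1 = mu(1), mu(0) = 1 - mu1. q :: bool => bool => real is the affinity matrix.\<close>

definition mag_Q :: "(bool \<Rightarrow> bool \<Rightarrow> real) \<Rightarrow> nat \<Rightarrow> (nat \<times> nat \<Rightarrow> bool) \<Rightarrow> nat \<Rightarrow> nat \<Rightarrow> real" where
  "mag_Q q L A u v = (\<Prod>l\<in>{1..L}. q (A (u, l)) (A (v, l)))"

definition mag_attrs :: "real \<Rightarrow> nat \<Rightarrow> nat \<Rightarrow> (nat \<times> nat \<Rightarrow> bool) pmf" where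
  "mag_attrs mu1 n L = Pi_pmf ({1..n} \<times> {1..L}) False (\<lambda>_. bernoulli_pmf mu1)"

definition mag_edges :: "(bool \<Rightarrow> bool \<Rightarrow> real) \<Rightarrow> nat \<Rightarrow> nat \<Rightarrow> (nat \<times> nat \<Rightarrow> bool) \<Rightarrow> (nat \<times> nat \<Rightarrow> bool) pmf" where
  "mag_edges q n L A = Pi_pmf {(u, v). 1 \<le> u \<and> u < v \<and> v \<le> n} False
      (\<lambda>(u, v). bernoulli_pmf (mag_Q q L A u v))"

definition mag_adj :: "(nat \<times> nat \<Rightarrow> bool) \<Rightarrow> nat \<Rightarrow> nat \<Rightarrow> bool" where
  "mag_adj E u v = (if u < v then E (u, v) else if v < u then E (v, u) else False)"

definition no_isolated :: "nat \<Rightarrow> (nat \<times> nat \<Rightarrow> bool) \<Rightarrow> bool" where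
  "no_isolated n E = (\<forall>u\<in>{1..n}. \<exists>v\<in>{1..n}. v \<noteq> u \<and> mag_adj E u v)"

definition mag_graph :: "real \<Rightarrow> (bool \<Rightarrow> bool \<Rightarrow> real) \<Rightarrow> nat \<Rightarrow> nat \<Rightarrow> (nat \<times> nat \<Rightarrow> bool) pmf" where
  "mag_graph mu1 q n L = mag_attrs mu1 n L \<bind> mag_edges q n L"

definition prob_no_isolated :: "real \<Rightarrow> (bool \<Rightarrow> bool \<Rightarrow> real) \<Rightarrow> nat \<Rightarrow> nat \<Rightarrow> real" where
  "prob_no_isolated mu1 q n L = measure_pmf.prob (mag_graph mu1 q n L) {E. no_isolated n E}"

definition mag_Gamma :: "real \<Rightarrow> (bool \<Rightarrow> bool \<Rightarrow> real) \<Rightarrow> bool \<Rightarrow> real" where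
  "mag_Gamma mu1 q a = q a False * (1 - mu1) + q a True * mu1"

end

theory Submission
  imports Defs "HOL-Real_Asymp.Real_Asymp"
begin


lemma Pi_pmf_curry:
  assumes "finite V" "finite J"
  shows "Pi_pmf (V \<times> J) d (\<lambda>_. p) =
     map_pmf (\<lambda>G (v, l). G v l) (Pi_pmf V (\<lambda>_. d) (\<lambda>_. Pi_pmf J d (\<lambda>_. p)))"
proof (rule pmf_eqI)
  fix A :: "'a \<times> 'b \<Rightarrow> 'c"
  define U :: "('a \<Rightarrow> 'b \<Rightarrow> 'c) \<Rightarrow> 'a \<times> 'b \<Rightarrow> 'c" where "U = (\<lambda>G (v, l). G v l)"
  have injU: "inj U"
    unfolding U_def inj_def by (metis case_prod_curry curry_case_prod)
  have AU: "A = U (curry A)" unfolding U_def by simp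
  have "pmf (map_pmf U (Pi_pmf V (\<lambda>_. d) (\<lambda>_. Pi_pmf J d (\<lambda>_. p)))) A
        = pmf (Pi_pmf V (\<lambda>_. d) (\<lambda>_. Pi_pmf J d (\<lambda>_. p))) (curry A)"
    by (subst AU, subst pmf_map_inj'[OF injU]) simp
  also have "\<dots> = pmf (Pi_pmf (V \<times> J) d (\<lambda>_. p)) A"
  proof (cases "\<forall>x. x \<notin> V \<times> J \<longrightarrow> A x = d")
    case True
    have "pmf (Pi_pmf V (\<lambda>_. d) (\<lambda>_. Pi_pmf J d (\<lambda>_. p))) (curry A)
        = (\<Prod>v\<in>V. pmf (Pi_pmf J d (\<lambda>_. p)) (curry A v))"
      using True assms by (subst pmf_Pi) (auto simp: fun_eq_iff)
    also have "\<dots> = (\<Prod>v\<in>V. \<Prod>l\<in>J. pmf p (A (v, l)))"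
      using True assms by (intro prod.cong refl, subst pmf_Pi) auto
    also have "\<dots> = (\<Prod>x\<in>V \<times> J. pmf p (A x))"
      by (simp add: prod.cartesian_product)
    also have "\<dots> = pmf (Pi_pmf (V \<times> J) d (\<lambda>_. p)) A"
      using True assms by (subst pmf_Pi) auto
    finally show ?thesis .
  next
    case False
    then obtain v l where vl: "(v, l) \<notin> V \<times> J" "A (v, l) \<noteq> d" by auto
    have rhs: "pmf (Pi_pmf (V \<times> J) d (\<lambda>_. p)) A = 0"
      using False assms by (subst pmf_Pi) auto
    show ?thesis
    proof (cases "v \<in> V")
      case False
      then show ?thesis using vl rhs assms by (subst pmf_Pi) (auto simp: fun_eq_iff)
    next
      case True
      with vl have "l \<notin> J" by auto
      have "pmf (Pi_pmf J d (\<lambda>_. p)) (curry A v) = 0"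
        using vl \<open>l \<notin> J\<close> assms by (subst pmf_Pi) auto
      hence "(\<Prod>w\<in>V. pmf (Pi_pmf J d (\<lambda>_. p)) (curry A w)) = 0"
        using True assms by (intro prod_zero) auto
      then show ?thesis using rhs assms by (subst pmf_Pi) auto
    qed
  qed
  finally show "pmf (Pi_pmf (V \<times> J) d (\<lambda>_. p)) A =
     pmf (map_pmf (\<lambda>G (v, l). G v l) (Pi_pmf V (\<lambda>_. d) (\<lambda>_. Pi_pmf J d (\<lambda>_. p)))) A"
    unfolding U_def by simp
qed

lemma finite_set_Pi_pmf:
  assumes "finite A" "\<And>x. x \<in> A \<Longrightarrow> finite (set_pmf (p x))"
  shows "finite (set_pmf (Pi_pmf A dflt p))"
  using assms by (subst set_Pi_pmf) (auto intro!: finite_PiE_dflt)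

lemma prob_bind_finite:
  assumes "finite (set_pmf M)"
  shows "measure_pmf.prob (M \<bind> N) X = measure_pmf.expectation M (\<lambda>x. measure_pmf.prob (N x) X)"
proof -
  have "ennreal (measure_pmf.prob (M \<bind> N) X) = emeasure (measure_pmf (M \<bind> N)) X"
    by (simp add: measure_pmf.emeasure_eq_measure)
  also have "\<dots> = \<integral>\<^sup>+ x. emeasure (measure_pmf (N x)) X \<partial>measure_pmf M"
    by (rule emeasure_bind_pmf)
  also have "\<dots> = \<integral>\<^sup>+ x. ennreal (measure_pmf.prob (N x) X) \<partial>measure_pmf M"
    by (simp add: measure_pmf.emeasure_eq_measure)
  also have "\<dots> = ennreal (measure_pmf.expectation M (\<lambda>x. measure_pmf.prob (N x) X))"
    by (rule nn_integral_eq_integral) (auto intro: integrable_measure_pmf_finite[OF assms])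
  finally show ?thesis
    by (subst (asm) ennreal_inj) (auto intro!: Bochner_Integration.integral_nonneg)
qed

lemma one_minus_prod_le_sum:
  fixes x :: "'a \<Rightarrow> real"
  assumes "finite S" "\<And>i. i \<in> S \<Longrightarrow> 0 \<le> x i \<and> x i \<le> 1"
  shows "1 - (\<Prod>i\<in>S. (1 - x i)) \<le> (\<Sum>i\<in>S. x i)"
  using assms
proof (induction S rule: finite_induct)
  case empty then show ?case by simp
next
  case (insert a S)
  have h: "0 \<le> (\<Prod>i\<in>S. (1 - x i))" "(\<Prod>i\<in>S. (1 - x i)) \<le> 1"
    using insert by (auto intro!: prod_nonneg prod_le_1)
  have IH: "1 - (\<Prod>i\<in>S. (1 - x i)) \<le> (\<Sum>i\<in>S. x i)" using insert by auto
  have xa: "0 \<le> x a" "x a \<le> 1" using insert by auto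
  have "1 - (1 - x a) * (\<Prod>i\<in>S. (1 - x i)) = x a * (\<Prod>i\<in>S. (1 - x i)) + (1 - (\<Prod>i\<in>S. (1 - x i)))"
    by (simp add: algebra_simps)
  also have "\<dots> \<le> x a + (\<Sum>i\<in>S. x i)"
    using IH h xa by (intro add_mono) (auto simp: mult_left_le)
  finally show ?case using insert by simp
qed

lemma iso_prob:
  fixes P :: "nat \<Rightarrow> nat \<Rightarrow> real"
  assumes u: "u \<in> {1..n}" and P01: "\<And>a b. 0 \<le> P a b \<and> P a b \<le> 1"
    and Psym: "\<And>a b. P a b = P b a"
  shows "measure_pmf.prob (Pi_pmf {(a, b). 1 \<le> a \<and> a < b \<and> b \<le> n} False
            (\<lambda>(a, b). bernoulli_pmf (P a b)))
           {E. \<forall>v\<in>{1..n}. v \<noteq> u \<longrightarrow> \<not> mag_adj E u v}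
         = (\<Prod>v\<in>{1..n} - {u}. (1 - P u v))"
proof -
  define I where "I = {(a, b). 1 \<le> a \<and> a < b \<and> b \<le> (n::nat)}"
  have finI: "finite I"
    by (rule finite_subset[of _ "{1..n} \<times> {1..n}"]) (auto simp: I_def)
  define Bs where "Bs = (\<lambda>i::nat \<times> nat. if fst i = u \<or> snd i = u then {False} else UNIV)"
  have eq: "{E. \<forall>v\<in>{1..n}. v \<noteq> u \<longrightarrow> \<not> mag_adj E u v} = Pi I Bs"
  proof (intro set_eqI iffI)
    fix E assume "E \<in> {E. \<forall>v\<in>{1..n}. v \<noteq> u \<longrightarrow> \<not> mag_adj E u v}"
    hence h: "\<And>v. v \<in> {1..n} \<Longrightarrow> v \<noteq> u \<Longrightarrow> \<not> mag_adj E u v" by auto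
    show "E \<in> Pi I Bs"
    proof
      fix i assume "i \<in> I"
      then obtain a b where i: "i = (a, b)" "1 \<le> a" "a < b" "b \<le> n" by (auto simp: I_def)
      show "E i \<in> Bs i"
      proof (cases "a = u \<or> b = u")
        case True
        then show ?thesis
        proof
          assume "a = u" thus ?thesis using h[of b] i by (auto simp: Bs_def mag_adj_def)
        next
          assume "b = u" thus ?thesis using h[of a] i by (auto simp: Bs_def mag_adj_def)
        qed
      qed (auto simp: Bs_def i)
    qed
  next
    fix E assume E: "E \<in> Pi I Bs"
    show "E \<in> {E. \<forall>v\<in>{1..n}. v \<noteq> u \<longrightarrow> \<not> mag_adj E u v}"
    proof (safe)
      fix v assume v: "v \<in> {1..n}" "v \<noteq> u" "mag_adj E u v"
      show False
      proof (cases "u < v")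
        case True
        hence "(u, v) \<in> I" using u v by (auto simp: I_def)
        hence "E (u, v) \<in> Bs (u, v)" using E by auto
        thus False using v True by (auto simp: Bs_def mag_adj_def)
      next
        case False
        hence "v < u" using v by auto
        hence "(v, u) \<in> I" using u v by (auto simp: I_def)
        hence "E (v, u) \<in> Bs (v, u)" using E by auto
        thus False using v \<open>v < u\<close> by (auto simp: Bs_def mag_adj_def)
      qed
    qed
  qed
  have "measure_pmf.prob (Pi_pmf I False (\<lambda>(a, b). bernoulli_pmf (P a b))) (Pi I Bs)
      = (\<Prod>i\<in>I. measure_pmf.prob ((\<lambda>(a, b). bernoulli_pmf (P a b)) i) (Bs i))"
    by (rule measure_Pi_pmf_Pi[OF finI])
  also have "\<dots> = (\<Prod>i\<in>I. if fst i = u \<or> snd i = u then 1 - P (fst i) (snd i) else 1)"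
  proof (intro prod.cong refl)
    fix i assume "i \<in> I"
    obtain a b where i: "i = (a, b)" by force
    show "measure_pmf.prob ((\<lambda>(a, b). bernoulli_pmf (P a b)) i) (Bs i) =
        (if fst i = u \<or> snd i = u then 1 - P (fst i) (snd i) else 1)"
      using P01[of a b] by (auto simp: Bs_def i measure_pmf_single)
  qed
  also have "\<dots> = (\<Prod>i\<in>{i\<in>I. fst i = u \<or> snd i = u}. 1 - P (fst i) (snd i))"
    by (rule prod.inter_filter[symmetric, OF finI])
  also have "\<dots> = (\<Prod>v\<in>{1..n} - {u}. 1 - P (fst (min u v, max u v)) (snd (min u v, max u v)))"
  proof (rule prod.reindex_bij_betw[symmetric])
    show "bij_betw (\<lambda>v. (min u v, max u v)) ({1..n} - {u}) {i \<in> I. fst i = u \<or> snd i = u}"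
    proof (rule bij_betw_byWitness[where f' = "\<lambda>i. if fst i = u then snd i else fst i"])
      show "\<forall>a\<in>{1..n} - {u}. (if fst (min u a, max u a) = u then snd (min u a, max u a)
            else fst (min u a, max u a)) = a"
        by (auto simp: min_def max_def)
      show "\<forall>a'\<in>{i \<in> I. fst i = u \<or> snd i = u}. (min u (if fst a' = u then snd a' else fst a'),
          max u (if fst a' = u then snd a' else fst a')) = a'"
        by (auto simp: I_def min_def max_def)
      show "(\<lambda>v. (min u v, max u v)) ` ({1..n} - {u}) \<subseteq> {i \<in> I. fst i = u \<or> snd i = u}"
        using u by (auto simp: I_def min_def max_def split: if_splits)
      show "(\<lambda>i. if fst i = u then snd i else fst i) ` {i \<in> I. fst i = u \<or> snd i = u} \<subseteq> {1..n} - {u}"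
        by (auto simp: I_def)
    qed
  qed
  also have "\<dots> = (\<Prod>v\<in>{1..n} - {u}. 1 - P u v)"
    by (intro prod.cong refl) (auto simp: min_def max_def Psym)
  finally show ?thesis using eq by (simp add: I_def)
qed


definition Bv :: "real \<Rightarrow> nat \<Rightarrow> (nat \<Rightarrow> bool) pmf" where
  "Bv mu1 L = Pi_pmf {1..L} False (\<lambda>_. bernoulli_pmf mu1)"

definition GG :: "real \<Rightarrow> nat \<Rightarrow> nat \<Rightarrow> (nat \<Rightarrow> nat \<Rightarrow> bool) pmf" where
  "GG mu1 n L = Pi_pmf {1..n} (\<lambda>_. False) (\<lambda>_. Bv mu1 L)"

definition QQ :: "(bool \<Rightarrow> bool \<Rightarrow> real) \<Rightarrow> nat \<Rightarrow> (nat \<Rightarrow> bool) \<Rightarrow> (nat \<Rightarrow> bool) \<Rightarrow> real" where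
  "QQ q L a b = (\<Prod>l\<in>{1..L}. q (a l) (b l))"

lemma finite_Bv [simp]: "finite (set_pmf (Bv mu1 L))"
  unfolding Bv_def by (rule finite_set_Pi_pmf) auto

lemma finite_GG [simp]: "finite (set_pmf (GG mu1 n L))"
  unfolding GG_def by (rule finite_set_Pi_pmf) auto

lemma integrable_Bv [simp]: "integrable (measure_pmf (Bv mu1 L)) (f :: _ \<Rightarrow> real)"
  by (rule integrable_measure_pmf_finite) simp

lemma integrable_GG [simp]: "integrable (measure_pmf (GG mu1 n L)) (f :: _ \<Rightarrow> real)"
  by (rule integrable_measure_pmf_finite) simp

lemma graph_eq: "mag_graph mu1 q n L = GG mu1 n L \<bind> (\<lambda>G. mag_edges q n L (case_prod G))"
  unfolding mag_graph_def mag_attrs_def GG_def Bv_def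
  by (subst Pi_pmf_curry) (auto simp: bind_map_pmf)

lemma Q_eq: "mag_Q q L (case_prod G) u v = QQ q L (G u) (G v)"
  by (simp add: mag_Q_def QQ_def)

lemma edges_eq: "mag_edges q n L (case_prod G) =
   Pi_pmf {(a, b). 1 \<le> a \<and> a < b \<and> b \<le> n} False (\<lambda>(a, b). bernoulli_pmf (QQ q L (G a) (G b)))"
  unfolding mag_edges_def Q_eq by simp

lemma GG_mem: "G \<in> set_pmf (GG mu1 n L) \<Longrightarrow> u \<in> {1..n} \<Longrightarrow> G u \<in> set_pmf (Bv mu1 L)"
  unfolding GG_def by (subst (asm) set_Pi_pmf) (auto simp: PiE_dflt_def)

context
  fixes mu1 :: real and q :: "bool \<Rightarrow> bool \<Rightarrow> real"
  assumes mu: "0 < mu1" "mu1 < 1"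
    and qsym0: "q False True = q True False"
    and q01: "\<And>a b. 0 < q a b \<and> q a b < 1"
begin

lemma q_sym: "q a b = q b a"
  using qsym0 by (cases a; cases b) auto

lemma QQ_01: "0 \<le> QQ q L a b \<and> QQ q L a b \<le> 1"
proof -
  have "\<And>a b. 0 \<le> q a b" "\<And>a b. q a b \<le> 1" using q01 less_imp_le by blast+
  thus ?thesis unfolding QQ_def by (simp add: prod_nonneg prod_le_1)
qed

lemma QQ_sym: "QQ q L a b = QQ q L b a"
  unfolding QQ_def by (simp add: q_sym)

lemma prob_NI_eq: "prob_no_isolated mu1 q n L =
   measure_pmf.expectation (GG mu1 n L)
     (\<lambda>G. measure_pmf.prob (mag_edges q n L (case_prod G)) {E. no_isolated n E})"
  unfolding prob_no_isolated_def graph_eq by (rule prob_bind_finite) simp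

lemma Pe_upper:
  "measure_pmf.prob (mag_edges q n L (case_prod G)) {E. no_isolated n E}
     \<ge> 1 - (\<Sum>u\<in>{1..n}. \<Prod>v\<in>{1..n} - {u}. (1 - QQ q L (G u) (G v)))"
proof -
  let ?M = "mag_edges q n L (case_prod G)"
  define iso where "iso = (\<lambda>u. {E. \<forall>v\<in>{1..n}. v \<noteq> u \<longrightarrow> \<not> mag_adj E u v})"
  have c: "- {E. no_isolated n E} = (\<Union>u\<in>{1..n}. iso u)"
    by (auto simp: no_isolated_def iso_def)
  have "measure_pmf.prob ?M (- {E. no_isolated n E}) \<le> (\<Sum>u\<in>{1..n}. measure_pmf.prob ?M (iso u))"
    unfolding c by (rule measure_pmf.finite_measure_subadditive_finite) auto
  also have "\<dots> = (\<Sum>u\<in>{1..n}. \<Prod>v\<in>{1..n} - {u}. (1 - QQ q L (G u) (G v)))"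
  proof (intro sum.cong refl)
    fix u assume u: "u \<in> {1..n}"
    show "measure_pmf.prob ?M (iso u) = (\<Prod>v\<in>{1..n} - {u}. (1 - QQ q L (G u) (G v)))"
      unfolding edges_eq iso_def
      by (rule iso_prob[OF u, of "\<lambda>a b. QQ q L (G a) (G b)"]) (auto simp: QQ_01 QQ_sym)
  qed
  finally have "measure_pmf.prob ?M (- {E. no_isolated n E}) \<le> (\<Sum>u\<in>{1..n}. \<Prod>v\<in>{1..n} - {u}. (1 - QQ q L (G u) (G v)))" .
  moreover have "- {E. no_isolated n E} = UNIV - {E. no_isolated n E}" by auto
  ultimately show ?thesis
    using measure_pmf.prob_compl[of "{E. no_isolated n E}" ?M] by simp
qed

lemma Pe_lower:
  "measure_pmf.prob (mag_edges q n L (case_prod G)) {E. no_isolated n E}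
     \<le> (\<Sum>v\<in>{1..n}. QQ q L (\<lambda>_. False) (G v))
       + (\<Prod>v\<in>{1..n}. (1 - (\<Prod>l\<in>{1..L}. if G v l then 0 else 1)))"
proof (cases "\<exists>u\<in>{1..n}. \<forall>l\<in>{1..L}. \<not> G u l")
  case True
  then obtain u where u: "u \<in> {1..n}" "\<forall>l\<in>{1..L}. \<not> G u l" by auto
  let ?M = "mag_edges q n L (case_prod G)"
  define iso where "iso = {E. \<forall>v\<in>{1..n}. v \<noteq> u \<longrightarrow> \<not> mag_adj E u v}"
  have sub: "{E. no_isolated n E} \<subseteq> - iso"
    using u by (auto simp: no_isolated_def iso_def)
  have "measure_pmf.prob ?M {E. no_isolated n E} \<le> measure_pmf.prob ?M (- iso)"
    by (rule measure_pmf.finite_measure_mono[OF sub]) auto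
  also have "\<dots> = 1 - (\<Prod>v\<in>{1..n} - {u}. (1 - QQ q L (G u) (G v)))"
  proof -
    have iso_eq: "measure_pmf.prob ?M iso = (\<Prod>v\<in>{1..n} - {u}. (1 - QQ q L (G u) (G v)))"
      unfolding edges_eq iso_def
      by (rule iso_prob[OF u(1), of "\<lambda>a b. QQ q L (G a) (G b)"]) (auto simp: QQ_01 QQ_sym)
    have "measure_pmf.prob ?M (- iso) = 1 - measure_pmf.prob ?M iso"
      using measure_pmf.prob_compl[of iso ?M] by (simp add: Compl_eq_Diff_UNIV)
    thus ?thesis using iso_eq by simp
  qed
  also have "\<dots> \<le> (\<Sum>v\<in>{1..n} - {u}. QQ q L (G u) (G v))"
    by (rule one_minus_prod_le_sum) (auto simp: QQ_01)
  also have "\<dots> = (\<Sum>v\<in>{1..n} - {u}. QQ q L (\<lambda>_. False) (G v))"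
    using u(2) by (intro sum.cong refl) (auto simp: QQ_def intro!: prod.cong)
  also have "\<dots> \<le> (\<Sum>v\<in>{1..n}. QQ q L (\<lambda>_. False) (G v))"
    by (rule sum_mono2) (auto simp: QQ_01)
  finally have le: "measure_pmf.prob ?M {E. no_isolated n E} \<le> (\<Sum>v\<in>{1..n}. QQ q L (\<lambda>_. False) (G v))" .
  have z: "(\<Prod>v\<in>{1..n}. (1 - (\<Prod>l\<in>{1..L}. if G v l then 0 else (1::real)))) = 0"
  proof (rule prod_zero)
    show "\<exists>v\<in>{1..n}. 1 - (\<Prod>l\<in>{1..L}. if G v l then 0 else (1::real)) = 0"
      using u by (intro bexI[of _ u]) (auto intro!: prod.neutral)
  qed simp
  show ?thesis unfolding z using le by simp
next
  case False
  have "(\<Prod>v\<in>{1..n}. (1 - (\<Prod>l\<in>{1..L}. if G v l then 0 else (1::real)))) = 1"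
  proof (intro prod.neutral ballI)
    fix v assume "v \<in> {1..n}"
    with False obtain l where "l \<in> {1..L}" "G v l" by (meson atLeastAtMost_iff)
    hence "(\<Prod>l\<in>{1..L}. if G v l then 0 else (1::real)) = 0"
      by (intro prod_zero) auto
    thus "1 - (\<Prod>l\<in>{1..L}. if G v l then 0 else (1::real)) = 1" by simp
  qed
  moreover have "0 \<le> (\<Sum>v\<in>{1..n}. QQ q L (\<lambda>_. False) (G v))"
    by (intro sum_nonneg) (auto simp: QQ_01)
  moreover have "measure_pmf.prob (mag_edges q n L (case_prod G)) {E. no_isolated n E} \<le> 1"
    by simp
  ultimately show ?thesis by linarith
qed

lemma Gamma_01: "0 < mag_Gamma mu1 q b \<and> mag_Gamma mu1 q b < 1"
proof -
  have a: "0 < q b False" "q b False < 1" "0 < q b True" "q b True < 1" using q01 by auto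
  have "0 < q b False * (1 - mu1) + q b True * mu1"
    using a mu by (intro add_pos_pos mult_pos_pos) auto
  moreover have "q b False * (1 - mu1) + q b True * mu1 < 1 * (1 - mu1) + 1 * mu1"
    using a mu by (intro add_strict_mono mult_strict_right_mono) auto
  ultimately show ?thesis unfolding mag_Gamma_def by simp
qed

lemma E_QQ: "measure_pmf.expectation (Bv mu1 L) (QQ q L a) = (\<Prod>l\<in>{1..L}. mag_Gamma mu1 q (a l))"
proof -
  have "measure_pmf.expectation (Bv mu1 L) (QQ q L a) =
     (\<Prod>l\<in>{1..L}. measure_pmf.expectation (bernoulli_pmf mu1) (\<lambda>v. q (a l) v))"
    unfolding Bv_def QQ_def
    by (rule expectation_prod_Pi_pmf[where f = "\<lambda>l v. q (a l) v"])
       (auto intro: integrable_measure_pmf_finite less_imp_le simp: q01)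
  also have "\<dots> = (\<Prod>l\<in>{1..L}. mag_Gamma mu1 q (a l))"
    using mu by (intro prod.cong refl) (simp add: integral_bernoulli_pmf mag_Gamma_def)
  finally show ?thesis .
qed

lemma E_allF: "measure_pmf.expectation (Bv mu1 L) (\<lambda>x. \<Prod>l\<in>{1..L}. if x l then 0 else (1::real))
   = (1 - mu1) ^ L"
proof -
  have "measure_pmf.expectation (Bv mu1 L) (\<lambda>x. \<Prod>l\<in>{1..L}. if x l then 0 else (1::real)) =
     (\<Prod>l\<in>{1..L}. measure_pmf.expectation (bernoulli_pmf mu1) (\<lambda>v. if v then 0 else (1::real)))"
    unfolding Bv_def
    by (rule expectation_prod_Pi_pmf[where f = "\<lambda>l v. if v then 0 else (1::real)"])
       (auto intro: integrable_measure_pmf_finite)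
  also have "\<dots> = (1 - mu1) ^ L"
    using mu by (simp add: integral_bernoulli_pmf)
  finally show ?thesis .
qed

lemma E_comp: "v \<in> {1..n} \<Longrightarrow>
  measure_pmf.expectation (GG mu1 n L) (\<lambda>G. f (G v)) = measure_pmf.expectation (Bv mu1 L) (f :: _ \<Rightarrow> real)"
proof -
  assume v: "v \<in> {1..n}"
  have "map_pmf (\<lambda>G. G v) (GG mu1 n L) = Bv mu1 L"
    unfolding GG_def using v by (subst Pi_pmf_component) auto
  thus ?thesis by (metis integral_map_pmf)
qed

lemma prod01: "0 \<le> (\<Prod>l\<in>S. if x l then 0 else (1::real))" "(\<Prod>l\<in>S. if x l then 0 else (1::real)) \<le> 1"
  by (auto intro!: prod_nonneg prod_le_1)

lemma E_W: "measure_pmf.expectation (GG mu1 n L) (\<lambda>G. \<Sum>v\<in>{1..n}. QQ q L (\<lambda>_. False) (G v))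
   = real n * mag_Gamma mu1 q False ^ L"
proof -
  have "measure_pmf.expectation (GG mu1 n L) (\<lambda>G. \<Sum>v\<in>{1..n}. QQ q L (\<lambda>_. False) (G v))
     = (\<Sum>v\<in>{1..n}. measure_pmf.expectation (Bv mu1 L) (QQ q L (\<lambda>_. False)))"
  proof -
    have "measure_pmf.expectation (GG mu1 n L) (\<lambda>G. \<Sum>v\<in>{1..n}. QQ q L (\<lambda>_. False) (G v))
      = (\<Sum>v\<in>{1..n}. measure_pmf.expectation (GG mu1 n L) (\<lambda>G. QQ q L (\<lambda>_. False) (G v)))"
      by (rule Bochner_Integration.integral_sum) simp
    also have "\<dots> = (\<Sum>v\<in>{1..n}. measure_pmf.expectation (Bv mu1 L) (QQ q L (\<lambda>_. False)))"
      by (intro sum.cong refl E_comp)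
    finally show ?thesis .
  qed
  also have "\<dots> = real n * mag_Gamma mu1 q False ^ L"
    by (simp add: E_QQ)
  finally show ?thesis .
qed

lemma E_Z: "measure_pmf.expectation (GG mu1 n L)
     (\<lambda>G. \<Prod>v\<in>{1..n}. (1 - (\<Prod>l\<in>{1..L}. if G v l then 0 else (1::real))))
   = (1 - (1 - mu1) ^ L) ^ n"
proof -
  have pr01: "0 \<le> (\<Prod>l\<in>{1..L}. if x l then 0 else (1::real)) \<and> (\<Prod>l\<in>{1..L}. if x l then 0 else (1::real)) \<le> 1" for x :: "nat \<Rightarrow> bool"
    by (auto intro!: prod_nonneg prod_le_1)
  have "measure_pmf.expectation (GG mu1 n L)
     (\<lambda>G. \<Prod>v\<in>{1..n}. (1 - (\<Prod>l\<in>{1..L}. if G v l then 0 else (1::real))))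
     = (\<Prod>v\<in>{1..n}. measure_pmf.expectation (Bv mu1 L) (\<lambda>x. 1 - (\<Prod>l\<in>{1..L}. if x l then 0 else (1::real))))"
    unfolding GG_def
    by (rule expectation_prod_Pi_pmf[where f = "\<lambda>v x. 1 - (\<Prod>l\<in>{1..L}. if x l then 0 else (1::real))"])
       (auto simp: prod01)
  also have "\<dots> = (1 - (1 - mu1) ^ L) ^ n"
    by (simp add: Bochner_Integration.integral_diff E_allF[simplified])
  finally show ?thesis .
qed

lemma E_iso:
  assumes g: "mag_Gamma mu1 q False < mag_Gamma mu1 q True" and u: "u \<in> {1..n}"
  shows "measure_pmf.expectation (GG mu1 n L)
           (\<lambda>G. \<Prod>v\<in>{1..n} - {u}. (1 - QQ q L (G u) (G v)))
         \<le> (1 - mag_Gamma mu1 q False ^ L) ^ (n - 1)"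
proof -
  define S where "S = set_pmf (Bv mu1 L)"
  define g0 where "g0 = mag_Gamma mu1 q False"
  define c where "c = (1 - g0 ^ L) ^ (n - 1)"
  define h :: "(nat \<Rightarrow> bool) \<Rightarrow> nat \<Rightarrow> (nat \<Rightarrow> bool) \<Rightarrow> real" where
    "h = (\<lambda>a v x. if v = u then (if x = a then 1 else 0) else 1 - QQ q L a x)"
  have finS: "finite S" unfolding S_def by simp
  have h_nonneg: "0 \<le> h a v x" for a v x
    unfolding h_def using QQ_01[of L a x] by auto
  have hprod: "(\<Prod>v\<in>{1..n}. h a v (G v)) =
      (if G u = a then (\<Prod>v\<in>{1..n} - {u}. (1 - QQ q L a (G v))) else 0)" for a G
  proof -
    have "(\<Prod>v\<in>{1..n}. h a v (G v)) = h a u (G u) * (\<Prod>v\<in>{1..n} - {u}. h a v (G v))"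
      using u by (subst prod.remove[of _ u]) auto
    also have "(\<Prod>v\<in>{1..n} - {u}. h a v (G v)) = (\<Prod>v\<in>{1..n} - {u}. (1 - QQ q L a (G v)))"
      by (intro prod.cong refl) (auto simp: h_def)
    finally show ?thesis by (simp add: h_def)
  qed
  have pw: "(\<Prod>v\<in>{1..n} - {u}. (1 - QQ q L (G u) (G v))) = (\<Sum>a\<in>S. \<Prod>v\<in>{1..n}. h a v (G v))"
    if "G \<in> set_pmf (GG mu1 n L)" for G
  proof -
    have "G u \<in> S" unfolding S_def using GG_mem[OF that u] .
    thus ?thesis unfolding hprod using finS by (simp add: sum.delta')
  qed
  have "measure_pmf.expectation (GG mu1 n L) (\<lambda>G. \<Prod>v\<in>{1..n} - {u}. (1 - QQ q L (G u) (G v)))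
      = measure_pmf.expectation (GG mu1 n L) (\<lambda>G. \<Sum>a\<in>S. \<Prod>v\<in>{1..n}. h a v (G v))"
    by (intro Bochner_Integration.integral_cong_AE AE_pmfI) (simp_all add: pw del: One_nat_def)
  also have "\<dots> = (\<Sum>a\<in>S. measure_pmf.expectation (GG mu1 n L) (\<lambda>G. \<Prod>v\<in>{1..n}. h a v (G v)))"
    by (rule Bochner_Integration.integral_sum) simp
  also have "\<dots> = (\<Sum>a\<in>S. \<Prod>v\<in>{1..n}. measure_pmf.expectation (Bv mu1 L) (h a v))"
    unfolding GG_def
    by (intro sum.cong refl expectation_prod_Pi_pmf) (auto simp: h_nonneg)
  also have "\<dots> \<le> (\<Sum>a\<in>S. pmf (Bv mu1 L) a * c)"
  proof (intro sum_mono)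
    fix a assume "a \<in> S"
    have Eu: "measure_pmf.expectation (Bv mu1 L) (h a u) = pmf (Bv mu1 L) a"
      by (subst integral_measure_pmf_real[where A = "{a}"]) (auto simp: h_def split: if_splits)
    have Ev: "measure_pmf.expectation (Bv mu1 L) (h a v) = 1 - (\<Prod>l\<in>{1..L}. mag_Gamma mu1 q (a l))"
      if "v \<noteq> u" for v
    proof -
      have "measure_pmf.expectation (Bv mu1 L) (h a v) =
          measure_pmf.expectation (Bv mu1 L) (\<lambda>x. 1 - QQ q L a x)"
        using that by (simp add: h_def)
      also have "\<dots> = 1 - measure_pmf.expectation (Bv mu1 L) (QQ q L a)"
        by (subst Bochner_Integration.integral_diff) auto
      finally show ?thesis by (simp add: E_QQ)
    qed
    define P where "P = (\<Prod>l\<in>{1..L}. mag_Gamma mu1 q (a l))"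
    have P1: "P \<le> 1" unfolding P_def using Gamma_01 by (intro prod_le_1) (auto intro: less_imp_le)
    have Pg: "g0 ^ L \<le> P"
    proof -
      have "(\<Prod>l\<in>{1..L}. g0) \<le> P" unfolding P_def
      proof (rule prod_mono)
        fix l show "0 \<le> g0 \<and> g0 \<le> mag_Gamma mu1 q (a l)"
          using Gamma_01[of False] g unfolding g0_def by (cases "a l") auto
      qed
      thus ?thesis by simp
    qed
    have "(\<Prod>v\<in>{1..n}. measure_pmf.expectation (Bv mu1 L) (h a v))
        = measure_pmf.expectation (Bv mu1 L) (h a u) * (\<Prod>v\<in>{1..n} - {u}. measure_pmf.expectation (Bv mu1 L) (h a v))"
      using u by (subst prod.remove[of _ u]) auto
    also have "\<dots> = pmf (Bv mu1 L) a * (\<Prod>v\<in>{1..n} - {u}. (1 - P))"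
      unfolding Eu P_def by (simp add: Ev)
    also have "\<dots> = pmf (Bv mu1 L) a * (1 - P) ^ (n - 1)"
      using u by simp
    also have "\<dots> \<le> pmf (Bv mu1 L) a * c"
      unfolding c_def using P1 Pg by (intro mult_left_mono power_mono) auto
    finally show "(\<Prod>v\<in>{1..n}. measure_pmf.expectation (Bv mu1 L) (h a v)) \<le> pmf (Bv mu1 L) a * c" .
  qed
  also have "\<dots> = c"
    using finS by (simp add: sum_distrib_right[symmetric] sum_pmf_eq_1 S_def)
  finally show ?thesis unfolding c_def g0_def .
qed

lemma PNI_upper:
  assumes g: "mag_Gamma mu1 q False < mag_Gamma mu1 q True"
  shows "1 - real n * (1 - mag_Gamma mu1 q False ^ L) ^ (n - 1) \<le> prob_no_isolated mu1 q n L"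
proof -
  define c where "c = (1 - mag_Gamma mu1 q False ^ L) ^ (n - 1)"
  have "1 - real n * c = measure_pmf.expectation (GG mu1 n L) (\<lambda>G. 1 - real n * c)"
    by simp
  also have "\<dots> \<le> measure_pmf.expectation (GG mu1 n L)
      (\<lambda>G. 1 - (\<Sum>u\<in>{1..n}. \<Prod>v\<in>{1..n} - {u}. (1 - QQ q L (G u) (G v))))"
  proof -
    have eq1: "measure_pmf.expectation (GG mu1 n L)
      (\<lambda>G. 1 - (\<Sum>u\<in>{1..n}. \<Prod>v\<in>{1..n} - {u}. (1 - QQ q L (G u) (G v))))
      = 1 - (\<Sum>u\<in>{1..n}. measure_pmf.expectation (GG mu1 n L) (\<lambda>G. \<Prod>v\<in>{1..n} - {u}. (1 - QQ q L (G u) (G v))))"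
      by (simp add: Bochner_Integration.integral_diff Bochner_Integration.integral_sum del: One_nat_def)
    have le1: "(\<Sum>u\<in>{1..n}. measure_pmf.expectation (GG mu1 n L) (\<lambda>G. \<Prod>v\<in>{1..n} - {u}. (1 - QQ q L (G u) (G v))))
       \<le> (\<Sum>u\<in>{1..n}. c)"
      unfolding c_def by (intro sum_mono E_iso[OF g])
    have "(\<Sum>u\<in>{1..n}. c) = real n * c" by simp
    moreover have "measure_pmf.expectation (GG mu1 n L) (\<lambda>G. 1 - real n * c) = 1 - real n * c" by simp
    ultimately show ?thesis using eq1 le1 by linarith
  qed
  also have "\<dots> \<le> measure_pmf.expectation (GG mu1 n L)
     (\<lambda>G. measure_pmf.prob (mag_edges q n L (case_prod G)) {E. no_isolated n E})"
    by (intro Bochner_Integration.integral_mono Pe_upper) simp_all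
  also have "\<dots> = prob_no_isolated mu1 q n L" by (rule prob_NI_eq[symmetric])
  finally show ?thesis unfolding c_def .
qed

lemma PNI_lower:
  "prob_no_isolated mu1 q n L \<le> real n * mag_Gamma mu1 q False ^ L + (1 - (1 - mu1) ^ L) ^ n"
proof -
  have "prob_no_isolated mu1 q n L \<le> measure_pmf.expectation (GG mu1 n L)
     (\<lambda>G. (\<Sum>v\<in>{1..n}. QQ q L (\<lambda>_. False) (G v))
       + (\<Prod>v\<in>{1..n}. (1 - (\<Prod>l\<in>{1..L}. if G v l then 0 else 1))))"
    unfolding prob_NI_eq by (intro Bochner_Integration.integral_mono Pe_lower) simp_all
  also have "\<dots> = real n * mag_Gamma mu1 q False ^ L + (1 - (1 - mu1) ^ L) ^ n"
    by (subst Bochner_Integration.integral_add) (simp_all add: E_W E_Z del: One_nat_def)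
  finally show ?thesis .
qed

end



lemma t1: assumes "(e::real) > 0" shows "(\<lambda>n::nat. real n * exp (- (real n powr e) / 2)) \<longlonglongrightarrow> 0"
  using assms by real_asymp

lemma t2: assumes "(e::real) > 0" shows "(\<lambda>n::nat. exp (- (real n powr e))) \<longlonglongrightarrow> 0"
  using assms by real_asymp

lemma t3: assumes "(e::real) > 0" shows "(\<lambda>n::nat. real n powr (-e)) \<longlonglongrightarrow> 0"
  using assms by real_asymp

lemma ratio:
  fixes L :: "nat \<Rightarrow> nat" and rho :: real
  assumes "rho > 0" "\<And>n. L n \<ge> 1" "(\<lambda>n. real (L n)) \<sim>[sequentially] (\<lambda>n. rho * ln (real n))"
  shows "(\<lambda>n. real (L n) / ln (real n)) \<longlonglongrightarrow> rho"
proof -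
  have "(\<lambda>n. real (L n) / (rho * ln (real n))) \<longlonglongrightarrow> 1"
  proof (rule asymp_equivD_strong[OF assms(3)])
    have nz: "real (L n) \<noteq> 0" for n using assms(2)[of n] by simp
    show "\<forall>\<^sub>F x in sequentially. real (L x) \<noteq> 0 \<or> rho * ln (real x) \<noteq> 0"
      by (intro always_eventually allI disjI1 nz)
  qed
  hence "(\<lambda>n. rho * (real (L n) / (rho * ln (real n)))) \<longlonglongrightarrow> rho * 1"
    by (intro tendsto_mult tendsto_const)
  moreover have "rho * (real (L n) / (rho * ln (real n))) = real (L n) / ln (real n)" for n
    using assms(1) by simp
  ultimately show ?thesis by simp
qed

lemma powL:
  fixes L :: "nat \<Rightarrow> nat" and rho c :: real
  assumes "0 < c" "n \<ge> 2"
  shows "real n * c ^ L n = exp (ln (real n) * (1 + (real (L n) / ln (real n)) * ln c))"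
proof -
  have ln: "ln (real n) > 0" using assms by simp
  have "c ^ L n = exp (real (L n) * ln c)" using assms by (simp add: exp_of_nat_mult exp_ln)
  moreover have "real n = exp (ln (real n))" using assms by simp
  ultimately have "real n * c ^ L n = exp (ln (real n) + real (L n) * ln c)"
    by (metis exp_add)
  also have "ln (real n) + real (L n) * ln c = ln (real n) * (1 + (real (L n) / ln (real n)) * ln c)"
    using ln by (simp add: field_simps)
  finally show ?thesis .
qed

lemma asy_small:
  fixes L :: "nat \<Rightarrow> nat" and rho c :: real
  assumes r: "(\<lambda>n. real (L n) / ln (real n)) \<longlonglongrightarrow> rho" and c: "0 < c" and neg: "1 + rho * ln c < 0"
  shows "(\<lambda>n. real n * c ^ L n) \<longlonglongrightarrow> 0"
proof -
  define x where "x = 1 + rho * ln c"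
  define e where "e = x / 2"
  have xneg: "x < 0" using neg unfolding x_def .
  have e: "e < 0" using xneg unfolding e_def by linarith
  have lt: "x < e" using xneg unfolding e_def by linarith
  have "(\<lambda>n. 1 + (real (L n) / ln (real n)) * ln c) \<longlonglongrightarrow> x"
    unfolding x_def by (intro tendsto_intros r)
  from this lt have ev: "eventually (\<lambda>n. 1 + (real (L n) / ln (real n)) * ln c < e) sequentially"
    by (rule order_tendstoD(2))
  have up: "eventually (\<lambda>n. real n * c ^ L n \<le> real n powr e) sequentially"
    using ev eventually_ge_at_top[of 2]
  proof eventually_elim
    case (elim n)
    have ln: "ln (real n) > 0" using elim by simp
    have "real n * c ^ L n = exp (ln (real n) * (1 + (real (L n) / ln (real n)) * ln c))"
      using powL[OF c elim(2)] .
    also have "\<dots> \<le> exp (ln (real n) * e)"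
      using elim ln by (intro exp_mono mult_left_mono) auto
    also have "\<dots> = real n powr e" using elim by (simp add: powr_def mult.commute)
    finally show ?case .
  qed
  have lim: "(\<lambda>n. real n powr e) \<longlonglongrightarrow> 0" using e by real_asymp
  have lo: "eventually (\<lambda>n. 0 \<le> real n * c ^ L n) sequentially" using c by simp
  show ?thesis by (rule tendsto_sandwich[OF lo up tendsto_const lim])
qed

lemma asy_large:
  fixes L :: "nat \<Rightarrow> nat" and rho c :: real
  assumes r: "(\<lambda>n. real (L n) / ln (real n)) \<longlonglongrightarrow> rho" and c: "0 < c" and pos: "1 + rho * ln c > 0"
  shows "\<exists>e>0. eventually (\<lambda>n. real n powr e \<le> real n * c ^ L n) sequentially"
proof -
  define e where "e = (1 + rho * ln c) / 2"
  have e: "e > 0" using pos by (simp add: e_def)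
  have "(\<lambda>n. 1 + (real (L n) / ln (real n)) * ln c) \<longlonglongrightarrow> 1 + rho * ln c"
    by (intro tendsto_intros r)
  hence ev: "eventually (\<lambda>n. 1 + (real (L n) / ln (real n)) * ln c > e) sequentially"
    by (rule order_tendstoD(1)) (use pos in \<open>simp add: e_def\<close>)
  have "eventually (\<lambda>n. real n powr e \<le> real n * c ^ L n) sequentially"
    using ev eventually_ge_at_top[of 2]
  proof eventually_elim
    case (elim n)
    have ln: "ln (real n) > 0" using elim by simp
    have "real n powr e = exp (ln (real n) * e)" using elim by (simp add: powr_def mult.commute)
    also have "\<dots> \<le> exp (ln (real n) * (1 + (real (L n) / ln (real n)) * ln c))"
      using elim ln by (intro exp_mono mult_left_mono) auto
    also have "\<dots> = real n * c ^ L n"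
      using powL[OF c elim(2)] by simp
    finally show ?case .
  qed
  thus ?thesis using e by blast
qed

lemma one_minus_pow_le: "0 \<le> x \<Longrightarrow> x \<le> 1 \<Longrightarrow> (1 - x) ^ n \<le> exp (- (real n * x))"
proof -
  assume x: "0 \<le> x" "x \<le> 1"
  have "(1 - x) ^ n \<le> exp (- x) ^ n"
    using x by (intro power_mono) (auto simp: exp_ge_add_one_self[of "-x", simplified])
  also have "\<dots> = exp (- (real n * x))" by (simp add: exp_of_nat_mult[symmetric])
  finally show ?thesis .
qed


theorem theorem1:
  fixes mu1 rho :: real and q :: "bool \<Rightarrow> bool \<Rightarrow> real" and L :: "nat \<Rightarrow> nat"
  assumes "0 < mu1" and "mu1 < 1"
    and "q False True = q True False"
    and "\<And>a b. 0 < q a b \<and> q a b < 1"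
    and "rho > 0"
    and "mag_Gamma mu1 q False < mag_Gamma mu1 q True"
    and "1 + rho * ln (1 - mu1) > 0"
    and "\<And>n. L n \<ge> 1"
    and "(\<lambda>n. real (L n)) \<sim>[sequentially] (\<lambda>n. rho * ln (real n))"
  shows "(1 + rho * ln (mag_Gamma mu1 q False) < 0 \<longrightarrow>
            (\<lambda>n. prob_no_isolated mu1 q n (L n)) \<longlonglongrightarrow> 0)
       \<and> (1 + rho * ln (mag_Gamma mu1 q False) > 0 \<longrightarrow>
            (\<lambda>n. prob_no_isolated mu1 q n (L n)) \<longlonglongrightarrow> 1)"
proof (intro conjI impI)
  define g0 where "g0 = mag_Gamma mu1 q False"
  have r: "(\<lambda>n. real (L n) / ln (real n)) \<longlonglongrightarrow> rho"
    by (rule ratio[OF assms(5,8,9)])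
  have g01: "0 < g0" "g0 < 1"
    using Gamma_01[OF assms(1,2,3,4), of False] unfolding g0_def by auto
  have P01: "0 \<le> prob_no_isolated mu1 q n (L n)" "prob_no_isolated mu1 q n (L n) \<le> 1" for n
    unfolding prob_no_isolated_def by auto
  {
    assume neg: "1 + rho * ln (mag_Gamma mu1 q False) < 0"
    have A: "(\<lambda>n. real n * g0 ^ L n) \<longlonglongrightarrow> 0"
      by (rule asy_small[OF r g01(1)]) (use neg in \<open>simp add: g0_def\<close>)
    obtain e where e: "e > 0" and ev: "eventually (\<lambda>n. real n powr e \<le> real n * (1 - mu1) ^ L n) sequentially"
      using asy_large[OF r _ assms(7)] assms(2) by auto
    have Bup: "eventually (\<lambda>n. (1 - (1 - mu1) ^ L n) ^ n \<le> exp (- (real n powr e))) sequentially"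
      using ev
    proof eventually_elim
      case (elim n)
      have x: "0 \<le> (1 - mu1) ^ L n" "(1 - mu1) ^ L n \<le> 1"
        using assms(1,2) by (auto intro: power_le_one)
      have "(1 - (1 - mu1) ^ L n) ^ n \<le> exp (- (real n * (1 - mu1) ^ L n))"
        by (rule one_minus_pow_le[OF x])
      also have "\<dots> \<le> exp (- (real n powr e))" using elim by simp
      finally show ?case .
    qed
    have Blo: "eventually (\<lambda>n. 0 \<le> (1 - (1 - mu1) ^ L n) ^ n) sequentially"
      using assms(1,2) by (intro always_eventually allI zero_le_power) (simp add: power_le_one)
    have B: "(\<lambda>n. (1 - (1 - mu1) ^ L n) ^ n) \<longlonglongrightarrow> 0"
      by (rule tendsto_sandwich[OF Blo Bup tendsto_const t2[OF e]])
    have AB: "(\<lambda>n. real n * g0 ^ L n + (1 - (1 - mu1) ^ L n) ^ n) \<longlonglongrightarrow> 0"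
      using tendsto_add[OF A B] by simp
    have up: "eventually (\<lambda>n. prob_no_isolated mu1 q n (L n) \<le> real n * g0 ^ L n + (1 - (1 - mu1) ^ L n) ^ n) sequentially"
      by (intro always_eventually allI) (unfold g0_def, rule PNI_lower[OF assms(1,2,3,4)])
    have lo: "eventually (\<lambda>n. 0 \<le> prob_no_isolated mu1 q n (L n)) sequentially"
      by (intro always_eventually allI P01)
    show "(\<lambda>n. prob_no_isolated mu1 q n (L n)) \<longlonglongrightarrow> 0"
      using tendsto_sandwich[OF lo up tendsto_const AB] by simp
  }
  {
    assume pos: "1 + rho * ln (mag_Gamma mu1 q False) > 0"
    obtain e where e: "e > 0" and ev: "eventually (\<lambda>n. real n powr e \<le> real n * g0 ^ L n) sequentially"
      using asy_large[OF r g01(1)] pos unfolding g0_def by auto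
    define D where "D = (\<lambda>n. real n * (1 - g0 ^ L n) ^ (n - 1))"
    have Dup: "eventually (\<lambda>n. D n \<le> real n * exp (- (real n powr e) / 2)) sequentially"
      using ev eventually_ge_at_top[of 2]
    proof eventually_elim
      case (elim n)
      have x: "0 \<le> g0 ^ L n" "g0 ^ L n \<le> 1"
        using g01 by (auto intro: power_le_one)
      have "(1 - g0 ^ L n) ^ (n - 1) \<le> exp (- (real (n - 1) * g0 ^ L n))"
        by (rule one_minus_pow_le[OF x])
      also have "\<dots> \<le> exp (- (real n powr e) / 2)"
      proof -
        have "real (n - 1) \<ge> real n / 2" using elim by simp
        hence "real (n - 1) * g0 ^ L n \<ge> real n / 2 * g0 ^ L n"
          using x by (intro mult_right_mono) auto
        thus ?thesis using elim by simp
      qed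
      finally show ?case unfolding D_def by (intro mult_left_mono) auto
    qed
    have Dlo: "eventually (\<lambda>n. 0 \<le> D n) sequentially"
      using g01 unfolding D_def
      by (intro always_eventually allI mult_nonneg_nonneg zero_le_power) (auto simp: power_le_one)
    have D: "D \<longlonglongrightarrow> 0"
      by (rule tendsto_sandwich[OF Dlo Dup tendsto_const t1[OF e]])
    have oneD: "(\<lambda>n. 1 - D n) \<longlonglongrightarrow> 1 - 0"
      by (intro tendsto_diff tendsto_const D)
    have lo: "eventually (\<lambda>n. 1 - D n \<le> prob_no_isolated mu1 q n (L n)) sequentially"
      unfolding D_def g0_def
      by (intro always_eventually allI PNI_upper[OF assms(1,2,3,4,6)])
    have up: "eventually (\<lambda>n. prob_no_isolated mu1 q n (L n) \<le> 1) sequentially"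
      by (intro always_eventually allI P01)
    show "(\<lambda>n. prob_no_isolated mu1 q n (L n)) \<longlonglongrightarrow> 1"
      using tendsto_sandwich[OF lo up _ tendsto_const] oneD by simp
  }
qed

end
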